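(* Let $f:\{0,1\}^n\to\{0,1\}^m$ be a Boolean function which is either constant or balanced. For each $i=0,\dots,m-1$ run $\mathrm{GPK}(\mathbf{e}_i)$ with output $\delta_i\in\{0,1\}^n$, and define $\boldsymbol\lambda=\lambda_{m-1}\dots\lambda_0\in\{0,1\}^m$ by $\lambda_i=0$ if $\delta_i=\mathbf{0}$ and $\lambda_i=1$ otherwise. Then with certainty: if $f$ is constant, $\boldsymbol\lambda=\mathbf{0}$; if $f$ is balanced with its two values $\mathbf{f}_1\neq\mathbf{f}_2$, then $\boldsymbol\lambda=\mathbf{f}_1\oplus\mathbf{f}_2$. In particular, the set of values of $f$ equals $\{f(\mathbf{0}),\,f(\mathbf{0})\oplus\boldsymbol\lambda\}$, so the possible values of $f$ are determined by these runs together with one classical evaluation of $f(\mathbf{0})$.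
   Context: A function $f:\{0,1\}^n\to\{0,1\}^m$ is constant if $f(\mathbf{x})$ is the same for all $\mathbf{x}$, and balanced if it takes exactly two distinct values, each on exactly half of the inputs. Bits are indexed from the right starting at $0$ and $\mathbf{e}_i=0^{m-1-i}\,1\,0^{i}\in\{0,1\}^m$. For strings $\mathbf{y},\mathbf{z}$ of equal length, $\mathbf{y}\oplus\mathbf{z}$ is bitwise XOR and $\mathbf{y}\cdot\mathbf{z}=\bigoplus_j y_jz_j$. $\mathbf{U}_f$ is the unitary with $\mathbf{U}_f(\ket{\mathbf{x}}_n\otimes\ket{\mathbf{z}}_m)=\ket{\mathbf{x}}_n\otimes\ket{\mathbf{z}\oplus f(\mathbf{x})}_m$; $\mathbf{H}_k=\mathbf{H}^{\otimes k}$ with $\mathbf{H}$ the one-qubit Hadamard gate. The algorithm $\mathrm{GPK}(\mathbf{y})$ for $\mathbf{y}\in\{0,1\}^m$: start in $\ket{\mathbf{0}}_n\otimes\ket{\mathbf{0}}_m$; apply Pauli $\mathbf{X}$ gates to get $\ket{\mathbf{0}}_n\otimes\ket{\mathbf{y}}_m$; apply $\mathbf{H}_{n+m}$; apply $\mathbf{U}_f$; apply $\mathbf{H}_n$ to the first register; measure the first register in the computational basis, giving the output in $\{0,1\}^n$. *)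

theory Defs
  imports Complex_Main
begin

text \<open>Bit strings in {0,1}^k are encoded as natural numbers below 2^k; bit j (indexed
from the right, starting at 0) of the string x is bit x j. XOR is bitwise xor on nat,
e_i is 2^i and the all-zero string is 0.\<close>

definition bdot :: "nat \<Rightarrow> nat \<Rightarrow> nat \<Rightarrow> bool" where
  "bdot k y z = odd (card {j. j < k \<and> bit y j \<and> bit z j})"

definition dsign :: "nat \<Rightarrow> nat \<Rightarrow> nat \<Rightarrow> complex" where
  "dsign k y z = (if bdot k y z then -1 else 1)"

text \<open>States of n+m qubits: amplitude functions on pairs (x,z), x < 2^n (first register),
z < 2^m (second register), i.e. amplitude of the basis vector |x>_n (x) |z>_m.\<close>

type_synonym state = "nat \<times> nat \<Rightarrow> complex"

definition basis_state :: "nat \<Rightarrow> nat \<Rightarrow> state" where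
  "basis_state x0 z0 = (\<lambda>(x,z). if x = x0 \<and> z = z0 then 1 else 0)"

definition H_all :: "nat \<Rightarrow> nat \<Rightarrow> state \<Rightarrow> state" where
  "H_all n m \<psi> = (\<lambda>(x,z). (\<Sum>x'<2^n. \<Sum>z'<2^m.
      dsign n x x' * dsign m z z' * \<psi> (x',z')) / complex_of_real (sqrt (2^(n+m))))"

definition U_f :: "(nat \<Rightarrow> nat) \<Rightarrow> state \<Rightarrow> state" where
  "U_f f \<psi> = (\<lambda>(x,z). \<psi> (x, xor z (f x)))"

definition H_first :: "nat \<Rightarrow> state \<Rightarrow> state" where
  "H_first n \<psi> = (\<lambda>(x,z). (\<Sum>x'<2^n. dsign n x x' * \<psi> (x',z)) / complex_of_real (sqrt (2^n)))"

text \<open>Final state of GPK(y) before measurement (the X gates turn |0>|0> into |0>|y>).\<close>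
definition gpk_state :: "nat \<Rightarrow> nat \<Rightarrow> (nat \<Rightarrow> nat) \<Rightarrow> nat \<Rightarrow> state" where
  "gpk_state n m f y = H_first n (U_f f (H_all n m (basis_state 0 y)))"

definition gpk_prob :: "nat \<Rightarrow> nat \<Rightarrow> (nat \<Rightarrow> nat) \<Rightarrow> nat \<Rightarrow> nat \<Rightarrow> real" where
  "gpk_prob n m f y \<delta> = (\<Sum>z<2^m. (cmod (gpk_state n m f y (\<delta>, z)))^2)"

definition gpk_event :: "nat \<Rightarrow> nat \<Rightarrow> (nat \<Rightarrow> nat) \<Rightarrow> nat \<Rightarrow> (nat \<Rightarrow> bool) \<Rightarrow> real" where
  "gpk_event n m f y P = (\<Sum>\<delta>\<in>{\<delta>. \<delta> < 2^n \<and> P \<delta>}. gpk_prob n m f y \<delta>)"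

definition is_constant :: "nat \<Rightarrow> (nat \<Rightarrow> nat) \<Rightarrow> bool" where
  "is_constant n f = (\<forall>x<2^n. \<forall>x'<2^n. f x = f x')"

definition balanced_with :: "nat \<Rightarrow> (nat \<Rightarrow> nat) \<Rightarrow> nat \<Rightarrow> nat \<Rightarrow> bool" where
  "balanced_with n f a b = (a \<noteq> b \<and> f ` {..<2^n} = {a, b} \<and>
      2 * card {x. x < 2^n \<and> f x = a} = 2^n \<and> 2 * card {x. x < 2^n \<and> f x = b} = 2^n)"

definition is_balanced :: "nat \<Rightarrow> (nat \<Rightarrow> nat) \<Rightarrow> bool" where
  "is_balanced n f = (\<exists>a b. balanced_with n f a b)"

end

theory Submission
  imports Defs
begin

definition ds :: "nat \<Rightarrow> nat \<Rightarrow> nat \<Rightarrow> real" where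
  "ds k y z = (if bdot k y z then -1 else 1)"

lemma dsign_ds: "dsign k y z = complex_of_real (ds k y z)"
  by (simp add: dsign_def ds_def)

lemma ds_prod: "ds n y z = (\<Prod>j<n. if bit y j \<and> bit z j then -1 else 1)"
proof -
  have "(\<Prod>j<n. if bit y j \<and> bit z j then -1 else (1::real))
     = prod (\<lambda>_. -1) {j\<in>{..<n}. bit y j \<and> bit z j}"
    by (rule prod.inter_filter[symmetric]) simp
  also have "{j\<in>{..<n}. bit y j \<and> bit z j} = {j. j < n \<and> bit y j \<and> bit z j}" by auto
  also have "prod (\<lambda>_. -1::real) {j. j < n \<and> bit y j \<and> bit z j} = (-1) ^ card {j. j < n \<and> bit y j \<and> bit z j}"
    by simp
  finally have "(\<Prod>j<n. if bit y j \<and> bit z j then -1 else (1::real)) = (-1) ^ card {j. j < n \<and> bit y j \<and> bit z j}" .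
  then show ?thesis unfolding ds_def bdot_def by (simp add: minus_one_power_iff)
qed

lemma sum_split2: "sum F {..<2*(N::nat)} = (\<Sum>k<N. F (2*k) + F (2*k+1))"
  by (induction N) (simp_all add: lessThan_Suc ac_simps)

lemma sum_prod_bits:
  "(\<Sum>d::nat<2^n. \<Prod>j<n. h j (bit d j)) = (\<Prod>j<n. (h j False + h j True :: real))"
proof (induction n arbitrary: h)
  case 0
  have "{..<(1::nat)} = {0}" by auto
  then show ?case by simp
next
  case (Suc n)
  have e1: "\<And>(k::nat) j. bit (k*2) (Suc j) = bit k j"
    by (simp add: bit_Suc)
  have e2: "\<And>(k::nat) j. bit (Suc (k*2)) (Suc j) = bit k j"
    by (simp add: bit_Suc)
  have "(\<Sum>d::nat<2^Suc n. \<Prod>j<Suc n. h j (bit d j))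
      = (\<Sum>k::nat<2^n. (h 0 False + h 0 True) * (\<Prod>j<n. h (Suc j) (bit k j)))"
    unfolding power_Suc sum_split2 prod.lessThan_Suc_shift
    by (simp add: e1 e2 bit_0 algebra_simps)
  also have "\<dots> = (h 0 False + h 0 True) * (\<Prod>j<n. h (Suc j) False + h (Suc j) True)"
    using Suc.IH[of "\<lambda>j. h (Suc j)"] by (simp add: sum_distrib_left[symmetric])
  also have "\<dots> = (\<Prod>j<Suc n. h j False + h j True)"
    by (simp only: prod.lessThan_Suc_shift)
  finally show ?case .
qed

lemma char_sum: "(\<Sum>d<2^n. ds n d w) = (if \<exists>j<n. bit w j then 0 else 2^n)"
proof -
  have "(\<Sum>d<2^n. ds n d w) = (\<Prod>j<n. ((\<lambda>j b. if b \<and> bit w j then -1 else 1) j False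
        + (\<lambda>j b. if b \<and> bit w j then -1 else 1) j True :: real))"
    unfolding ds_prod by (rule sum_prod_bits)
  also have "\<dots> = (\<Prod>j<n. if bit w j then 0 else 2)"
    by (rule prod.cong) auto
  also have "\<dots> = (if \<exists>j<n. bit w j then 0 else 2^n)"
    by auto
  finally show ?thesis .
qed

lemma ds_mult: "ds n d x * ds n d x' = ds n d (xor x x')"
  unfolding ds_prod prod.distrib[symmetric] by (rule prod.cong) (auto simp: bit_xor_iff)

lemma low_bits_eq:
  fixes x x' :: nat
  assumes "x < 2^n" "x' < 2^n"
  shows "(\<exists>j<n. bit (xor x x') j) \<longleftrightarrow> x \<noteq> x'"
proof
  assume "\<exists>j<n. bit (xor x x') j" then show "x \<noteq> x'" by auto
next
  assume ne: "x \<noteq> x'"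
  have tx: "take_bit n x = x" "take_bit n x' = x'" using assms by (simp_all add: take_bit_nat_eq_self_iff)
  obtain j where "bit x j \<noteq> bit x' j" using ne bit_eq_iff by blast
  moreover then have "j < n" using tx by (metis bit_take_bit_iff)
  ultimately show "\<exists>j<n. bit (xor x x') j" by (auto simp: bit_xor_iff)
qed

lemma parseval:
  assumes sq: "\<And>x. x < 2^n \<Longrightarrow> (s x)^2 = (1::real)"
  shows "(\<Sum>d<2^n. (\<Sum>x<2^n. ds n d x * s x)^2) = 4^n"
proof -
  have "(\<Sum>d<2^n. (\<Sum>x<2^n. ds n d x * s x)^2)
      = (\<Sum>d<2^n. \<Sum>x<2^n. \<Sum>x'<2^n. s x * s x' * ds n d (xor x x'))"
  proof (rule sum.cong[OF refl])
    fix d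
    have m: "ds n d x * s x * (ds n d x' * s x') = s x * s x' * ds n d (xor x x')" for x x'
      by (simp only: ds_mult[symmetric] mult_ac)
    show "(\<Sum>x<2^n. ds n d x * s x)^2 = (\<Sum>x<2^n. \<Sum>x'<2^n. s x * s x' * ds n d (xor x x'))"
      by (simp only: power2_eq_square sum_product m)
  qed
  also have "\<dots> = (\<Sum>x<2^n. \<Sum>x'<2^n. s x * s x' * (\<Sum>d<2^n. ds n d (xor x x')))"
  proof -
    have "(\<Sum>d<(2::nat)^n. \<Sum>x<(2::nat)^n. \<Sum>x'<(2::nat)^n. s x * s x' * ds n d (xor x x'))
       = (\<Sum>x<2^n. \<Sum>d<2^n. \<Sum>x'<2^n. s x * s x' * ds n d (xor x x'))" by (rule sum.swap)
    also have "\<dots> = (\<Sum>x<2^n. \<Sum>x'<2^n. \<Sum>d<2^n. s x * s x' * ds n d (xor x x'))"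
      by (rule sum.cong[OF refl], rule sum.swap)
    also have "\<dots> = (\<Sum>x<2^n. \<Sum>x'<2^n. s x * s x' * (\<Sum>d<2^n. ds n d (xor x x')))"
      by (simp only: sum_distrib_left)
    finally show ?thesis .
  qed
  also have "\<dots> = (\<Sum>x::nat<2^n. \<Sum>x'::nat<2^n. if x = x' then 2^n else 0)"
  proof (rule sum.cong[OF refl], rule sum.cong[OF refl])
    fix x x' assume "x \<in> {..<(2::nat)^n}" "x' \<in> {..<(2::nat)^n}"
    then show "s x * s x' * (\<Sum>d<2^n. ds n d (xor x x')) = (if x = x' then 2^n else 0)"
      using low_bits_eq[of x n x'] sq[of x] by (auto simp: char_sum power2_eq_square)
  qed
  also have "\<dots> = 4^n" by (simp add: power_mult_distrib[symmetric])
  finally show ?thesis .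
qed
lemma dsign_0: "dsign n x 0 = 1"
  by (simp add: dsign_def bdot_def)

lemma H_all_basis:
  assumes "y < 2^m"
  shows "H_all n m (basis_state 0 y) (x,z) = dsign m z y / complex_of_real (sqrt (2^(n+m)))"
proof -
  have "(\<Sum>x'<2^n. \<Sum>z'<2^m. dsign n x x' * dsign m z z' * basis_state 0 y (x',z'))
     = (\<Sum>x'::nat<2^n. if x' = 0 then dsign n x 0 * dsign m z y else 0)"
  proof (rule sum.cong[OF refl])
    fix x' assume "x' \<in> {..<(2::nat)^n}"
    show "(\<Sum>z'<2^m. dsign n x x' * dsign m z z' * basis_state 0 y (x',z')) = (if x' = 0 then dsign n x 0 * dsign m z y else 0)"
      using assms by (simp add: basis_state_def if_distrib[of "\<lambda>t. _ * t"] cong: if_cong)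
  qed
  also have "\<dots> = dsign m z y" by (simp add: dsign_0)
  finally show ?thesis by (simp add: H_all_def)
qed

lemma bdot_pow2: "i < m \<Longrightarrow> bdot m w (2^i) = bit w i"
proof -
  assume i: "i < m"
  have "{j. j < m \<and> bit w j \<and> bit ((2::nat)^i) j} = (if bit w i then {i} else {})"
    using i by (auto simp: bit_exp_iff)
  then show ?thesis by (simp add: bdot_def)
qed

definition sg :: "bool \<Rightarrow> real" where "sg b = (if b then -1 else 1)"

lemma state_formula:
  assumes i: "i < m"
  shows "gpk_state n m f (2^i) (d,z) = complex_of_real
     (sg (bit z i) * (\<Sum>x<2^n. ds n d x * sg (bit (f x) i)) / (sqrt (2^(n+m)) * sqrt (2^n)))"
proof -
  have y: "(2::nat)^i < 2^m" using i by simp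
  have dd: "ds m (xor z (f x)) (2^i) = sg (bit z i) * sg (bit (f x) i)" for x
    using i by (simp add: ds_def bdot_pow2 sg_def bit_xor_iff)
  have "gpk_state n m f (2^i) (d,z) = (\<Sum>x<2^n. dsign n d x * (dsign m (xor z (f x)) (2^i) / complex_of_real (sqrt (2^(n+m))))) / complex_of_real (sqrt (2^n))"
    unfolding gpk_state_def H_first_def U_f_def by (simp add: H_all_basis[OF y])
  also have "\<dots> = complex_of_real
     (sg (bit z i) * (\<Sum>x<2^n. ds n d x * sg (bit (f x) i)) / (sqrt (2^(n+m)) * sqrt (2^n)))"
    unfolding dsign_ds dd of_real_mult of_real_divide of_real_sum sum_distrib_left sum_divide_distrib
    by (rule sum.cong) (simp_all add: field_simps)
  finally show ?thesis .
qed

lemma prob_formula: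
  assumes i: "i < m"
  shows "gpk_prob n m f (2^i) d = (\<Sum>x<2^n. ds n d x * sg (bit (f x) i))^2 / 4^n"
proof -
  define C where "C = (\<Sum>x<2^n. ds n d x * sg (bit (f x) i))"
  have sq: "(sg b)^2 = 1" for b by (simp add: sg_def)
  have "gpk_prob n m f (2^i) d = (\<Sum>z<(2::nat)^m. C^2 / (2^(n+m) * 2^n))"
    unfolding gpk_prob_def state_formula[OF i] C_def[symmetric] norm_of_real power2_abs
    by (simp add: power_divide power_mult_distrib sq)
  also have "\<dots> = C^2 / 4^n"
    by (simp add: power_add power_mult_distrib[symmetric] field_simps)
  finally show ?thesis unfolding C_def .
qed
lemma total:
  assumes i: "i < m"
  shows "(\<Sum>d<2^n. gpk_prob n m f (2^i) d) = 1"
proof -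
  have "(\<Sum>d<2^n. gpk_prob n m f (2^i) d) = (\<Sum>d<2^n. (\<Sum>x<2^n. ds n d x * sg (bit (f x) i))^2) / 4^n"
    by (simp add: prob_formula[OF i] sum_divide_distrib)
  also have "\<dots> = 1" by (subst parseval) (auto simp: sg_def)
  finally show ?thesis .
qed

lemma event_sum: "gpk_event n m f y P = (\<Sum>d<2^n. if P d then gpk_prob n m f y d else 0)"
proof -
  have eqs: "{\<delta>. \<delta> < 2^n \<and> P \<delta>} = {\<delta>\<in>{..<2^n}. P \<delta>}" by auto
  show ?thesis unfolding gpk_event_def eqs by (rule sum.inter_filter) simp
qed

lemma event_compl:
  assumes i: "i < m"
  shows "gpk_event n m f (2^i) P + gpk_event n m f (2^i) (\<lambda>d. \<not> P d) = 1"
  unfolding event_sum sum.distrib[symmetric] using total[OF i, of n f]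
  by (smt (verit, del_insts) sum.cong)

lemma event_zero: "gpk_event n m f y (\<lambda>d. d = 0) = gpk_prob n m f y 0"
proof -
  have "{\<delta>::nat. \<delta> < 2^n \<and> \<delta> = 0} = {0}" by auto
  then show ?thesis unfolding gpk_event_def by simp
qed

lemma ds_0: "ds n 0 x = 1" by (simp add: ds_def bdot_def)

lemma const_bit:
  assumes i: "i < m" and c: "\<forall>x<2^n. bit (f x) i = b"
  shows "gpk_event n m f (2^i) (\<lambda>d. d = 0) = 1"
proof -
  have "(\<Sum>x<2^n. ds n 0 x * sg (bit (f x) i)) = (\<Sum>x<(2::nat)^n. sg b)"
    using c by (intro sum.cong) (auto simp: ds_0)
  also have "\<dots> = 2^n * sg b" by simp
  finally have C: "(\<Sum>x<2^n. ds n 0 x * sg (bit (f x) i)) = 2^n * sg b" .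
  have "((2::real)^n * sg b)^2 = 4^n"
  proof -
    have "((2::real)^n * sg b)^2 = ((2::real)^n)^2 * (sg b)^2" by (rule power_mult_distrib)
    also have "((2::real)^n)^2 = 4^n" unfolding power2_eq_square power_mult_distrib[symmetric] by simp
    finally show ?thesis by (simp add: sg_def)
  qed
  then show ?thesis unfolding event_zero prob_formula[OF i] C by simp
qed

lemma bal_bit:
  assumes i: "i < m" and bw: "balanced_with n f a b" and ne: "bit a i \<noteq> bit b i"
  shows "gpk_event n m f (2^i) (\<lambda>d. d \<noteq> 0) = 1"
proof -
  define A where "A = {x. x < 2^n \<and> f x = a}"
  define B where "B = {x. x < 2^n \<and> f x = b}"
  have ab: "a \<noteq> b" "f ` {..<2^n} = {a, b}" "2 * card A = 2^n" "2 * card B = 2^n"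
    using bw unfolding balanced_with_def A_def B_def by auto
  have U: "{..<2^n} = A \<union> B" using ab(2) unfolding A_def B_def by auto
  have D: "A \<inter> B = {}" using ab(1) unfolding A_def B_def by auto
  have fin: "finite A" "finite B" unfolding A_def B_def by auto
  have "(\<Sum>x<2^n. ds n 0 x * sg (bit (f x) i)) = (\<Sum>x\<in>A \<union> B. sg (bit (f x) i))"
    by (simp add: ds_0 U)
  also have "\<dots> = (\<Sum>x\<in>A. sg (bit (f x) i)) + (\<Sum>x\<in>B. sg (bit (f x) i))"
    using fin D by (rule sum.union_disjoint)
  also have "\<dots> = (\<Sum>x\<in>A. sg (bit a i)) + (\<Sum>x\<in>B. sg (bit b i))"
    unfolding A_def B_def by simp
  also have "\<dots> = card A * sg (bit a i) + card B * sg (bit b i)" by simp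
  also have "\<dots> = 0"
  proof -
    have "real (card A) = real (card B)" using ab by simp
    then show ?thesis using ne by (simp add: sg_def)
  qed
  finally have p0: "gpk_prob n m f (2^i) 0 = 0" unfolding prob_formula[OF i] by simp
  have "gpk_event n m f (2^i) (\<lambda>d. d = 0) + gpk_event n m f (2^i) (\<lambda>d. \<not> d = 0) = 1"
    by (rule event_compl[OF i])
  then show ?thesis unfolding event_zero p0 by simp
qed

lemma event_unique:
  assumes i: "i < m"
    and e1: "gpk_event n m f (2^i) (\<lambda>d. (d \<noteq> 0) = c) = 1"
    and e2: "gpk_event n m f (2^i) (\<lambda>d. (d \<noteq> 0) = c') = 1"
  shows "c = c'"
proof (rule ccontr)
  assume "c \<noteq> c'"
  then have "(\<lambda>d::nat. (d \<noteq> 0) = c') = (\<lambda>d. \<not> ((d \<noteq> 0) = c))" by auto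
  then show False using event_compl[OF i, of n f "\<lambda>d. (d \<noteq> 0) = c"] e1 e2 by simp
qed

lemma bits_eq_below:
  fixes x y :: nat
  assumes "x < 2^m" "y < 2^m" "\<forall>i<m. bit x i = bit y i"
  shows "x = y"
  using low_bits_eq[OF assms(1,2)] assms(3) by (auto simp: bit_xor_iff)

lemma xor_below:
  fixes a b :: nat
  assumes "a < 2^m" "b < 2^m"
  shows "xor a b < 2^m"
proof -
  have "take_bit m (xor a b) = xor a b"
    using assms by (simp add: take_bit_xor take_bit_nat_eq_self)
  then show ?thesis by (metis take_bit_nat_eq_self_iff)
qed

theorem corollary3p5:
  fixes n m :: nat and f :: "nat \<Rightarrow> nat"
  assumes range: "\<forall>x<2^n. f x < 2^m"
    and cb: "is_constant n f \<or> is_balanced n f"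
  shows "(is_constant n f \<longrightarrow>
            (\<forall>i<m. gpk_event n m f (2^i) (\<lambda>\<delta>. \<delta> = 0) = 1))
       \<and> (\<forall>f1 f2. balanced_with n f f1 f2 \<longrightarrow>
            (\<forall>i<m. gpk_event n m f (2^i) (\<lambda>\<delta>. (\<delta> \<noteq> 0) = bit (xor f1 f2) i) = 1))
       \<and> (\<forall>lam<2^m. (\<forall>i<m. gpk_event n m f (2^i) (\<lambda>\<delta>. (\<delta> \<noteq> 0) = bit lam i) = 1) \<longrightarrow>
            f ` {..<2^n} = {f 0, xor (f 0) lam})"
proof -
  have P1: "gpk_event n m f (2^i) (\<lambda>\<delta>. \<delta> = 0) = 1" if c: "is_constant n f" and i: "i < m" for i
  proof -
    have z: "(0::nat) < 2^n" by simp
    have "\<forall>x<2^n. bit (f x) i = bit (f 0) i"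
    proof (intro allI impI)
      fix x :: nat assume "x < 2^n"
      then have "f x = f 0" using c z unfolding is_constant_def by blast
      then show "bit (f x) i = bit (f 0) i" by simp
    qed
    then show ?thesis by (rule const_bit[OF i])
  qed
  have P2: "gpk_event n m f (2^i) (\<lambda>\<delta>. (\<delta> \<noteq> 0) = bit (xor f1 f2) i) = 1"
    if bw: "balanced_with n f f1 f2" and i: "i < m" for f1 f2 i
  proof (cases "bit f1 i = bit f2 i")
    case True
    have im: "f x \<in> {f1, f2}" if "x < 2^n" for x
      using bw that unfolding balanced_with_def by auto
    have "(\<lambda>\<delta>::nat. (\<delta> \<noteq> 0) = bit (xor f1 f2) i) = (\<lambda>\<delta>. \<delta> = 0)"
      using True by (auto simp: bit_xor_iff)
    moreover have "\<forall>x<2^n. bit (f x) i = bit f1 i"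
    proof (intro allI impI)
      fix x :: nat assume "x < 2^n"
      then have "f x = f1 \<or> f x = f2" using im by simp
      then show "bit (f x) i = bit f1 i" using True by auto
    qed
    then have "gpk_event n m f (2^i) (\<lambda>\<delta>. \<delta> = 0) = 1"
      by (rule const_bit[OF i])
    ultimately show ?thesis by simp
  next
    case False
    have "(\<lambda>\<delta>::nat. (\<delta> \<noteq> 0) = bit (xor f1 f2) i) = (\<lambda>\<delta>. \<delta> \<noteq> 0)"
      using False by (auto simp: bit_xor_iff)
    then show ?thesis using bal_bit[OF i bw False] by simp
  qed
  have P3: "f ` {..<2^n} = {f 0, xor (f 0) lam}"
    if lam: "lam < 2^m" and h: "\<forall>i<m. gpk_event n m f (2^i) (\<lambda>\<delta>. (\<delta> \<noteq> 0) = bit lam i) = 1" for lam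
    using cb
  proof
    assume c: "is_constant n f"
    have "\<forall>i<m. bit lam i = bit (0::nat) i"
    proof (intro allI impI)
      fix i assume i: "i < m"
      have "(\<lambda>\<delta>::nat. \<delta> = 0) = (\<lambda>\<delta>. (\<delta> \<noteq> 0) = False)" by auto
      then have "gpk_event n m f (2^i) (\<lambda>\<delta>. (\<delta> \<noteq> 0) = False) = 1" using P1[OF c i] by simp
      moreover have "gpk_event n m f (2^i) (\<lambda>\<delta>. (\<delta> \<noteq> 0) = bit lam i) = 1" using h i by simp
      ultimately have "False = bit lam i" by (rule event_unique[OF i])
      then show "bit lam i = bit (0::nat) i" by simp
    qed
    then have "lam = 0" using bits_eq_below[OF lam, of 0] by simp
    moreover have "f ` {..<2^n} = {f 0}"
    proof
      have z: "(0::nat) < 2^n" by simp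
      show "f ` {..<2^n} \<subseteq> {f 0}"
      proof
        fix v assume "v \<in> f ` {..<2^n}"
        then obtain x where "x < 2^n" "v = f x" by auto
        then show "v \<in> {f 0}" using c z unfolding is_constant_def by blast
      qed
      show "{f 0} \<subseteq> f ` {..<2^n}" by simp
    qed
    ultimately show ?thesis by simp
  next
    assume "is_balanced n f"
    then obtain a b where bw: "balanced_with n f a b" unfolding is_balanced_def by blast
    have img: "f ` {..<2^n} = {a, b}" using bw unfolding balanced_with_def by auto
    have "a \<in> f ` {..<2^n}" "b \<in> f ` {..<2^n}" using img by simp_all
    then have "a < 2^m" "b < 2^m" using range by auto
    then have xb: "xor a b < 2^m" by (rule xor_below)
    have "\<forall>i<m. bit lam i = bit (xor a b) i"
    proof (intro allI impI)
      fix i assume i: "i < m"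
      have "gpk_event n m f (2^i) (\<lambda>\<delta>. (\<delta> \<noteq> 0) = bit lam i) = 1" using h i by simp
      then have "bit (xor a b) i = bit lam i" by (rule event_unique[OF i P2[OF bw i]])
      then show "bit lam i = bit (xor a b) i" by simp
    qed
    then have "lam = xor a b" using bits_eq_below[OF lam xb] by simp
    moreover have "f 0 \<in> {a, b}" using img by (metis image_eqI lessThan_iff zero_less_numeral zero_less_power)
    moreover have "xor a (xor a b) = b" "xor b (xor a b) = a"
      by (auto intro!: bit_eqI simp: bit_xor_iff)
    ultimately show ?thesis using img by auto
  qed
  show ?thesis
  proof (intro conjI allI impI)
    fix i assume "is_constant n f" "i < m"
    then show "gpk_event n m f (2^i) (\<lambda>\<delta>. \<delta> = 0) = 1" by (rule P1)
  next
    fix f1 f2 i assume "balanced_with n f f1 f2" "i < m"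
    then show "gpk_event n m f (2^i) (\<lambda>\<delta>. (\<delta> \<noteq> 0) = bit (xor f1 f2) i) = 1" by (rule P2)
  next
    fix lam :: nat assume "lam < 2^m" "\<forall>i<m. gpk_event n m f (2^i) (\<lambda>\<delta>. (\<delta> \<noteq> 0) = bit lam i) = 1"
    then show "f ` {..<2^n} = {f 0, xor (f 0) lam}" by (rule P3)
  qed
qed

end
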